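(* For every integer $n\ge 0$ with $n+k>0$ and every $x\in\mathbb{R}$, $$\Big(1-\frac{k^2}{(n+k)^2}\Big)E_n^k(x)=E_{-n}^k(-x)-\frac{k}{n+k}\,E_{-n}^k(x).$$
   Context: Fix $k\ge 0$. Partial order on $\mathbb{Z}$: $j\triangleleft n$ iff either ($|j|<|n|$ and $|n|-|j|$ is a positive even integer) or ($|j|=|n|$ and $n<j$). Let $\delta_k(x)=|2\sin x|^{2k}$ and $(f,g)_k=\frac{1}{2\pi}\int_0^{2\pi} f(x)\overline{g(x)}\delta_k(x)\,dx$. The non-symmetric Heckman–Opdam polynomials $E_n^k$, $n\in\mathbb{Z}$, are the functions on $\mathbb{R}$ of the form $E_n^k(x)=e^{nx}+\sum_{j\triangleleft n}c_{n,j}e^{jx}$ (finite sum) such that $(E_n^k(i\,\cdot),e^{ij\,\cdot})_k=0$ for all $j\triangleleft n$. *)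

theory Defs
  imports "HOL-Analysis.Analysis"
begin

definition ho_less :: "int \<Rightarrow> int \<Rightarrow> bool" where
  "ho_less j n \<longleftrightarrow>
     (\<bar>j\<bar> < \<bar>n\<bar> \<and> even (\<bar>n\<bar> - \<bar>j\<bar>)) \<or> (\<bar>j\<bar> = \<bar>n\<bar> \<and> n < j)"

definition ho_weight :: "real \<Rightarrow> real \<Rightarrow> real" where
  "ho_weight k x = \<bar>2 * sin x\<bar> powr (2 * k)"

definition ho_inner :: "real \<Rightarrow> (real \<Rightarrow> complex) \<Rightarrow> (real \<Rightarrow> complex) \<Rightarrow> complex" where
  "ho_inner k f g = (1 / (2 * pi)) *
     integral {0..2*pi} (\<lambda>x. f x * cnj (g x) * complex_of_real (ho_weight k x))"

definition ho_expoly :: "int \<Rightarrow> (int \<Rightarrow> complex) \<Rightarrow> complex \<Rightarrow> complex" where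
  "ho_expoly n c z = (\<Sum>j\<in>insert n {j. ho_less j n}. c j * exp (of_int j * z))"

definition ho_coeffs :: "real \<Rightarrow> int \<Rightarrow> (int \<Rightarrow> complex)" where
  "ho_coeffs k n = (THE c. c n = 1 \<and>
       (\<forall>j. j \<noteq> n \<and> \<not> ho_less j n \<longrightarrow> c j = 0) \<and>
       (\<forall>j. ho_less j n \<longrightarrow>
          ho_inner k (\<lambda>x. ho_expoly n c (\<i> * of_real x))
                     (\<lambda>x. exp (\<i> * of_int j * of_real x)) = 0))"

definition HO_E :: "real \<Rightarrow> int \<Rightarrow> real \<Rightarrow> complex" where
  "HO_E k n x = ho_expoly n (ho_coeffs k n) (of_real x)"

end

theory Submission
  imports Defs
begin


definition W :: "real \<Rightarrow> real \<Rightarrow> real" where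
  "W k t = (if k = 0 then 1 else \<bar>2 * sin t\<bar> powr (2*k))"

definition ip :: "real \<Rightarrow> (real \<Rightarrow> complex) \<Rightarrow> (real \<Rightarrow> complex) \<Rightarrow> complex" where
  "ip k f g = (1/(2*pi)) * integral {0..2*pi} (\<lambda>t. f t * cnj (g t) * complex_of_real (W k t))"

definition ee :: "int \<Rightarrow> real \<Rightarrow> complex" where
  "ee j t = exp (\<i> * of_int j * of_real t)"

definition tp :: "int set \<Rightarrow> (int \<Rightarrow> complex) \<Rightarrow> real \<Rightarrow> complex" where
  "tp S c t = (\<Sum>j\<in>S. c j * ee j t)"

lemma W_cont: assumes "k \<ge> 0" shows "continuous_on A (W k)"
proof (cases "k = 0")
  case True then show ?thesis by (simp add: W_def)
next
  case False
  then have "continuous_on A (\<lambda>t. \<bar>2 * sin t\<bar> powr (2*k))"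
    using assms by (intro continuous_on_powr') (auto intro!: continuous_intros)
  then show ?thesis using False unfolding W_def by simp
qed

lemma W_nonneg: "W k t \<ge> 0" by (simp add: W_def)

lemma W_pos: "sin t \<noteq> 0 \<Longrightarrow> W k t > 0" by (simp add: W_def)

lemma sin_zeros:
  assumes "t \<in> {0..2*pi}" "sin t = 0" shows "t \<in> {0, pi, 2*pi}"
proof -
  obtain i :: int where i: "t = of_int i * pi" using assms(2) sin_zero_iff_int2 by blast
  have "0 \<le> of_int i * pi" "of_int i * pi \<le> 2 * pi" using assms(1) i by auto
  then have "0 \<le> i" "i \<le> 2" 
    by (auto simp: zero_le_mult_iff mult_le_cancel_right2) (smt (verit) mult_le_cancel_right of_int_le_iff of_int_numeral pi_gt_zero)
  then have "i = 0 \<or> i = 1 \<or> i = 2" by auto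
  then show ?thesis using i by auto
qed

lemma ho_inner_ip: "ho_inner k f g = ip k f g"
proof -
  have "integral {0..2*pi} (\<lambda>t. f t * cnj (g t) * complex_of_real (ho_weight k t))
      = integral {0..2*pi} (\<lambda>t. f t * cnj (g t) * complex_of_real (W k t))"
  proof (rule integral_spike)
    show "negligible {0, pi, 2*pi}" by simp
    fix t assume t: "t \<in> {0..2*pi} - {0, pi, 2*pi}"
    then have "sin t \<noteq> 0" using sin_zeros by blast
    then show "f t * cnj (g t) * complex_of_real (W k t) = f t * cnj (g t) * complex_of_real (ho_weight k t)"
      by (simp add: W_def ho_weight_def)
  qed
  then show ?thesis unfolding ho_inner_def ip_def by simp
qed

lemma ee_cont[continuous_intros]: "continuous_on A (ee j)"
  unfolding ee_def by (intro continuous_intros)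

lemma tp_cont[continuous_intros]: "continuous_on A (tp S c)"
  unfolding tp_def by (intro continuous_intros)

lemma cnj_ee: "cnj (ee j t) = ee (-j) t"
  by (simp add: ee_def exp_cnj)

lemma ee_mult: "ee j t * ee l t = ee (j + l) t"
  by (simp add: ee_def exp_add[symmetric] algebra_simps)

lemma ee_refl: "ee j (2*pi - t) = ee (-j) t"
proof -
  have "ee j (2*pi - t) = exp (2 * pi * \<i> * of_int j) * ee (-j) t"
  proof -
    have "\<i> * of_int j * of_real (2*pi - t) = 2 * pi * \<i> * of_int j + \<i> * of_int (-j) * of_real t"
      by (simp add: algebra_simps)
    then show ?thesis by (simp only: ee_def exp_add)
  qed
  also have "exp (2 * pi * \<i> * of_int j) = 1"
    using exp_integer_2pi[of "of_int j"] by (simp add: mult_ac)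
  finally show ?thesis by simp
qed

lemma ip_integrable:
  assumes "k \<ge> 0" "continuous_on {0..2*pi} f" "continuous_on {0..2*pi} g"
  shows "(\<lambda>t. f t * cnj (g t) * complex_of_real (W k t)) integrable_on {0..2*pi}"
  by (intro integrable_continuous_interval continuous_intros assms W_cont continuous_on_of_real)

lemma ip_add:
  assumes "k \<ge> 0" "continuous_on {0..2*pi} f" "continuous_on {0..2*pi} g" "continuous_on {0..2*pi} h"
  shows "ip k (\<lambda>t. f t + g t) h = ip k f h + ip k g h"
proof -
  have "integral {0..2*pi} (\<lambda>t. (f t + g t) * cnj (h t) * complex_of_real (W k t))
     = integral {0..2*pi} (\<lambda>t. f t * cnj (h t) * complex_of_real (W k t) + g t * cnj (h t) * complex_of_real (W k t))"
    by (simp add: algebra_simps)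
  also have "\<dots> = integral {0..2*pi} (\<lambda>t. f t * cnj (h t) * complex_of_real (W k t)) + integral {0..2*pi} (\<lambda>t. g t * cnj (h t) * complex_of_real (W k t))"
    by (intro integral_add ip_integrable assms)
  finally show ?thesis unfolding ip_def by (simp add: algebra_simps)
qed

lemma ip_diff:
  assumes "k \<ge> 0" "continuous_on {0..2*pi} f" "continuous_on {0..2*pi} g" "continuous_on {0..2*pi} h"
  shows "ip k (\<lambda>t. f t - g t) h = ip k f h - ip k g h"
proof -
  have "integral {0..2*pi} (\<lambda>t. (f t - g t) * cnj (h t) * complex_of_real (W k t))
     = integral {0..2*pi} (\<lambda>t. f t * cnj (h t) * complex_of_real (W k t) - g t * cnj (h t) * complex_of_real (W k t))"
    by (simp add: algebra_simps)
  also have "\<dots> = integral {0..2*pi} (\<lambda>t. f t * cnj (h t) * complex_of_real (W k t)) - integral {0..2*pi} (\<lambda>t. g t * cnj (h t) * complex_of_real (W k t))"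
    by (intro integral_diff ip_integrable assms)
  finally have "integral {0..2*pi} (\<lambda>t. (f t - g t) * cnj (h t) * complex_of_real (W k t))
     = integral {0..2*pi} (\<lambda>t. f t * cnj (h t) * complex_of_real (W k t)) - integral {0..2*pi} (\<lambda>t. g t * cnj (h t) * complex_of_real (W k t))" .
  then show ?thesis unfolding ip_def by (simp only: right_diff_distrib)
qed

lemma ip_cmult: "ip k (\<lambda>t. c * f t) h = c * ip k f h"
proof -
  have "integral {0..2*pi} (\<lambda>t. (c * f t) * cnj (h t) * complex_of_real (W k t))
     = integral {0..2*pi} (\<lambda>t. c * (f t * cnj (h t) * complex_of_real (W k t)))"
    by (simp add: algebra_simps)
  also have "\<dots> = c * integral {0..2*pi} (\<lambda>t. f t * cnj (h t) * complex_of_real (W k t))"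
    by (rule integral_mult_right)
  finally show ?thesis unfolding ip_def by (simp add: algebra_simps)
qed

lemma ip_cnj: "ip k g f = cnj (ip k f g)"
proof -
  have "cnj (integral {0..2*pi} (\<lambda>t. f t * cnj (g t) * complex_of_real (W k t)))
     = integral {0..2*pi} (\<lambda>t. g t * cnj (f t) * complex_of_real (W k t))"
    by (simp add: integral_cnj mult_ac)
  then show ?thesis unfolding ip_def by simp
qed

lemma ip_sum:
  assumes "k \<ge> 0" "finite A" "\<And>a. a \<in> A \<Longrightarrow> continuous_on {0..2*pi} (f a)" "continuous_on {0..2*pi} h"
  shows "ip k (\<lambda>t. \<Sum>a\<in>A. c a * f a t) h = (\<Sum>a\<in>A. c a * ip k (f a) h)"
  using assms(2,3)
proof (induction A rule: finite_induct)
  case empty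
  then show ?case by (simp add: ip_def)
next
  case (insert x F)
  have "ip k (\<lambda>t. \<Sum>a\<in>insert x F. c a * f a t) h = ip k (\<lambda>t. c x * f x t + (\<Sum>a\<in>F. c a * f a t)) h"
    using insert by simp
  also have "\<dots> = ip k (\<lambda>t. c x * f x t) h + ip k (\<lambda>t. \<Sum>a\<in>F. c a * f a t) h"
    using insert assms(1,4) by (intro ip_add) (auto intro!: continuous_intros)
  also have "\<dots> = (\<Sum>a\<in>insert x F. c a * ip k (f a) h)"
    using insert by (simp add: ip_cmult)
  finally show ?case .
qed

lemma ip_sum_right:
  assumes "k \<ge> 0" "finite A" "\<And>a. a \<in> A \<Longrightarrow> continuous_on {0..2*pi} (f a)" "continuous_on {0..2*pi} h"
  shows "ip k h (\<lambda>t. \<Sum>a\<in>A. c a * f a t) = (\<Sum>a\<in>A. cnj (c a) * ip k h (f a))"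
proof -
  have "ip k h (\<lambda>t. \<Sum>a\<in>A. c a * f a t) = cnj (ip k (\<lambda>t. \<Sum>a\<in>A. c a * f a t) h)"
    by (rule ip_cnj)
  also have "\<dots> = cnj (\<Sum>a\<in>A. c a * ip k (f a) h)" using ip_sum[OF assms] by simp
  also have "\<dots> = (\<Sum>a\<in>A. cnj (c a) * ip k h (f a))"
    by (simp add: ip_cnj[of k "f _" h])
  finally show ?thesis .
qed

lemma integral_ee: "integral {0..2*pi} (ee m) = (if m = 0 then 2*pi else 0)"
proof (cases "m = 0")
  case True
  have "ee 0 = (\<lambda>t. 1)" by (auto simp: ee_def fun_eq_iff)
  then show ?thesis using True by (simp add: scaleR_conv_of_real)
next
  case False
  define F where "F = (\<lambda>z::complex. exp (\<i> * of_int m * z) / (\<i> * of_int m))"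
  have d: "((\<lambda>t. F (of_real t)) has_vector_derivative ee m t) (at t within {0..2*pi})" for t
  proof -
    have "(F has_field_derivative exp (\<i> * of_int m * of_real t)) (at (of_real t))"
      unfolding F_def using False
      by (auto intro!: derivative_eq_intros simp: field_simps)
    then show ?thesis unfolding ee_def by (rule has_vector_derivative_real_field)
  qed
  have "(ee m has_integral (F (of_real (2*pi)) - F (of_real 0))) {0..2*pi}"
    by (rule fundamental_theorem_of_calculus) (use d in auto)
  moreover have "F (of_real (2*pi)) = F (of_real 0)"
  proof -
    have "exp (\<i> * of_int m * of_real (2*pi)) = 1"
      using exp_integer_2pi[of "of_int m"] by (simp add: mult_ac)
    then show ?thesis by (simp add: F_def)
  qed
  ultimately show ?thesis using False by (simp add: integral_unique)
qed

lemma fourier_coeff: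
  assumes "finite S" "j \<in> S"
  shows "integral {0..2*pi} (\<lambda>t. tp S c t * cnj (ee j t)) = 2 * complex_of_real pi * c j"
proof -
  have "(\<lambda>t. tp S c t * cnj (ee j t)) = (\<lambda>t. \<Sum>l\<in>S. c l * ee (l - j) t)"
    by (auto simp: tp_def sum_distrib_right cnj_ee mult.assoc ee_mult)
  then have "integral {0..2*pi} (\<lambda>t. tp S c t * cnj (ee j t)) = (\<Sum>l\<in>S. integral {0..2*pi} (\<lambda>t. c l * ee (l - j) t))"
    using assms by (simp add: integral_sum integrable_continuous_interval continuous_intros)
  also have "\<dots> = (\<Sum>l\<in>S. c l * (if l = j then 2*pi else 0))"
    by (simp add: integral_ee)
  also have "\<dots> = 2 * complex_of_real pi * c j"
    using assms by (simp add: if_distrib sum.delta cong: if_cong)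
  finally show ?thesis .
qed

lemma posdef:
  assumes k: "k \<ge> 0" and S: "finite S" and z: "ip k (tp S c) (tp S c) = 0" and j: "j \<in> S"
  shows "c j = 0"
proof -
  define h where "h t = (cmod (tp S c t))\<^sup>2 * W k t" for t
  have hc: "continuous_on {0..2*pi} h" unfolding h_def
    by (intro continuous_intros W_cont k)
  have hint: "(h has_integral integral {0..2*pi} h) {0..2*pi}"
    using hc integrable_continuous_interval integrable_integral by blast
  have eq: "tp S c t * cnj (tp S c t) * complex_of_real (W k t) = complex_of_real (h t)" for t
    unfolding h_def
  proof -
    have "tp S c t * cnj (tp S c t) = complex_of_real ((cmod (tp S c t))\<^sup>2)" by (rule complex_norm_square[symmetric])
    then show "tp S c t * cnj (tp S c t) * complex_of_real (W k t) = complex_of_real ((cmod (tp S c t))\<^sup>2 * W k t)"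
      by (simp only: of_real_mult)
  qed
  have "((\<lambda>t. complex_of_real (h t)) has_integral complex_of_real (integral {0..2*pi} h)) {0..2*pi}"
    using has_integral_of_real[OF hint] by simp
  then have "integral {0..2*pi} (\<lambda>t. tp S c t * cnj (tp S c t) * complex_of_real (W k t)) = complex_of_real (integral {0..2*pi} h)"
    unfolding eq by (rule integral_unique)
  with z have "integral {0..2*pi} h = 0" unfolding ip_def by simp
  with hint have h0: "(h has_integral 0) (cbox 0 (2*pi))" by simp
  have hz: "h t = 0" if "t \<in> {0..2*pi}" for t
    using has_integral_0_cbox_imp_0[OF _ _ h0, of t] hc that pi_gt_zero
    by (auto simp: W_nonneg h_def)
  have tz: "tp S c t = 0" if "t \<in> {0..2*pi} - {0, pi, 2*pi}" for t
  proof -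
    have "sin t \<noteq> 0" using that sin_zeros by blast
    then have "W k t > 0" by (rule W_pos)
    with hz[of t] that show ?thesis by (auto simp: h_def)
  qed
  have "integral {0..2*pi} (\<lambda>t. tp S c t * cnj (ee j t)) = integral {0..2*pi} (\<lambda>t. 0)"
    by (rule integral_spike[of "{0, pi, 2*pi}"]) (auto simp: tz)
  then show ?thesis using fourier_coeff[OF S j, where c=c] by simp
qed

definition Pset :: "int \<Rightarrow> int set" where
  "Pset m = {p. -m < p \<and> p \<le> m \<and> even (m - p)}"

definition De :: "real \<Rightarrow> int \<Rightarrow> int \<Rightarrow> complex" where
  "De k j p = (if p = j then of_int j - of_real k else 0) +
     (if p \<in> Pset \<bar>j\<bar> then (if j > 0 then 2 * of_real k else - 2 * of_real k) else 0)"

definition Dfun :: "real \<Rightarrow> int \<Rightarrow> real \<Rightarrow> complex" where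
  "Dfun k j = tp {-\<bar>j\<bar>..\<bar>j\<bar>} (De k j)"

lemma Dfun_cont[continuous_intros]: "continuous_on A (Dfun k j)"
  unfolding Dfun_def by (rule tp_cont)

lemma ee_pow: "ee j t ^ i = ee (j * int i) t"
  by (induction i) (auto simp: ee_mult algebra_simps, simp add: ee_def)

lemma ee_nz: "ee j t \<noteq> 0" by (simp add: ee_def)

lemma ee_neg: "ee (-j) t = 1 / ee j t"
proof -
  have "ee (-j) t * ee j t = 1" by (simp add: ee_mult, simp add: ee_def)
  then show ?thesis using ee_nz by (simp add: field_simps)
qed

lemma Pset_image: "Pset (int m) = (\<lambda>i. int m - 2 * int i) ` {..<m}"
proof (intro set_eqI iffI)
  fix p assume "p \<in> Pset (int m)"
  then have p: "- int m < p" "p \<le> int m" "even (int m - p)" by (auto simp: Pset_def)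
  from p(3) obtain r where r: "int m - p = 2 * r" by (rule evenE)
  have "r \<ge> 0" "r < int m" using p r by auto
  then show "p \<in> (\<lambda>i. int m - 2 * int i) ` {..<m}"
    using r by (intro image_eqI[of _ _ "nat r"]) auto
next
  fix p assume "p \<in> (\<lambda>i. int m - 2 * int i) ` {..<m}"
  then obtain i where "i < m" "p = int m - 2 * int i" by auto
  then show "p \<in> Pset (int m)" by (auto simp: Pset_def)
qed

lemma geom_ee: "(1 - ee (-2) t) * (\<Sum>p\<in>Pset (int m). ee p t) = ee (int m) t - ee (- int m) t"
proof -
  have inj: "inj_on (\<lambda>i. int m - 2 * int i) {..<m}" by (auto simp: inj_on_def)
  have "(\<Sum>p\<in>Pset (int m). ee p t) = (\<Sum>i<m. ee (int m - 2 * int i) t)"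
    unfolding Pset_image by (simp add: sum.reindex[OF inj])
  also have "\<dots> = ee (int m) t * (\<Sum>i<m. ee (-2) t ^ i)"
    by (simp add: sum_distrib_left ee_pow ee_mult)
  finally have "(1 - ee (-2) t) * (\<Sum>p\<in>Pset (int m). ee p t) = ee (int m) t * (1 - ee (-2) t ^ m)"
    by (simp add: one_diff_power_eq)
  also have "\<dots> = ee (int m) t - ee (- int m) t"
    by (simp add: ee_pow ee_mult algebra_simps)
  finally show ?thesis .
qed

lemma if_mult0: "(if P then a else 0) * b = (if P then a * b else (0::complex))" by simp

lemma sum_if_filter:
  fixes s :: complex
  assumes "finite A"
  shows "(\<Sum>p\<in>A. (if Q p then s else 0) * f p) = s * (\<Sum>p\<in>{p\<in>A. Q p}. f p)"
proof -
  have "(\<Sum>p\<in>{p\<in>A. Q p}. f p) = (\<Sum>p\<in>A. if Q p then f p else 0)"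
    by (rule sum.inter_filter[OF assms])
  have "s * (\<Sum>p\<in>{p\<in>A. Q p}. f p) = (\<Sum>p\<in>A. s * (if Q p then f p else 0))"
    unfolding sum.inter_filter[OF assms] by (rule sum_distrib_left)
  also have "\<dots> = (\<Sum>p\<in>A. (if Q p then s else 0) * f p)"
    by (rule sum.cong) auto
  finally show ?thesis by simp
qed

lemma Dfun_closed:
  assumes E: "ee (-2) t \<noteq> 1"
  shows "Dfun k j t = (of_int j - of_real k) * ee j t
           + 2 * of_real k * (ee j t - ee (-j) t) / (1 - ee (-2) t)"
proof -
  define s where "s = (if j > 0 then 2 * complex_of_real k else - 2 * of_real k)"
  have "Dfun k j t = (\<Sum>p\<in>{-\<bar>j\<bar>..\<bar>j\<bar>}. (if p = j then of_int j - of_real k else 0) * ee p t)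
        + (\<Sum>p\<in>{-\<bar>j\<bar>..\<bar>j\<bar>}. (if p \<in> Pset \<bar>j\<bar> then s else 0) * ee p t)"
    unfolding Dfun_def tp_def De_def s_def by (simp add: distrib_right sum.distrib)
  also have "(\<Sum>p\<in>{-\<bar>j\<bar>..\<bar>j\<bar>}. (if p = j then of_int j - of_real k else 0) * ee p t)
     = (of_int j - of_real k) * ee j t"
  proof -
    have "j \<in> {-\<bar>j\<bar>..\<bar>j\<bar>}" by auto
    then show ?thesis by (simp only: if_mult0 sum.delta finite_atLeastAtMost_int if_True)
  qed
  also have "(\<Sum>p\<in>{-\<bar>j\<bar>..\<bar>j\<bar>}. (if p \<in> Pset \<bar>j\<bar> then s else 0) * ee p t)
      = s * (\<Sum>p\<in>Pset \<bar>j\<bar>. ee p t)"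
  proof -
    have "{p \<in> {-\<bar>j\<bar>..\<bar>j\<bar>}. p \<in> Pset \<bar>j\<bar>} = Pset \<bar>j\<bar>" by (auto simp: Pset_def)
    then show ?thesis by (simp add: sum_if_filter)
  qed
  also have "s * (\<Sum>p\<in>Pset \<bar>j\<bar>. ee p t) = 2 * of_real k * (ee j t - ee (-j) t) / (1 - ee (-2) t)"
  proof -
    have g: "(1 - ee (-2) t) * (\<Sum>p\<in>Pset \<bar>j\<bar>. ee p t) = ee \<bar>j\<bar> t - ee (- \<bar>j\<bar>) t"
      using geom_ee[of t "nat \<bar>j\<bar>"] by simp
    have "s * (ee \<bar>j\<bar> t - ee (- \<bar>j\<bar>) t) = 2 * of_real k * (ee j t - ee (-j) t)"
      unfolding s_def by (cases "j > 0") (auto simp: abs_if algebra_simps)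
    moreover have "(\<Sum>p\<in>Pset \<bar>j\<bar>. ee p t) = (ee \<bar>j\<bar> t - ee (- \<bar>j\<bar>) t) / (1 - ee (-2) t)"
      using g E by (simp add: eq_divide_eq mult.commute)
    ultimately show ?thesis by (metis times_divide_eq_right)
  qed
  finally show ?thesis .
qed


lemma ee_minus2: "ee (-2) t = Complex (cos (2*t)) (- sin (2*t))"
proof -
  have "ee (-2) t = exp (\<i> * complex_of_real (-2*t))" by (simp add: ee_def mult.assoc)
  also have "\<dots> = cis (-2*t)" by (simp add: cis_conv_exp)
  finally show ?thesis by (simp add: complex_eq_iff)
qed

lemma E_rel: "(1 - ee (-2) t) * (complex_of_real (sin t) - \<i> * complex_of_real (cos t)) = 2 * complex_of_real (sin t)"
proof -
  have s: "(sin t)\<^sup>2 + (cos t)\<^sup>2 = 1" by simp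
  have a: "sin (t * 2) = 2 * sin t * cos t" using sin_double[of t] by (simp add: mult.commute)
  have b: "cos (t * 2) = 1 - 2 * (sin t)\<^sup>2" using cos_double_sin[of t] by (simp add: mult.commute)
  have c: "(cos t)\<^sup>2 = 1 - (sin t)\<^sup>2" using s by linarith
  have "cos t * sin (t * 2) = 2 * sin t * (cos t)\<^sup>2"
    unfolding a by (simp add: power2_eq_square)
  also have "\<dots> = 2 * sin t * (1 - (sin t)\<^sup>2)" using c by simp
  also have "\<dots> = sin t + sin t * cos (t * 2)" unfolding b by (simp add: algebra_simps)
  finally have "cos t * sin (t * 2) = sin t + sin t * cos (t * 2)" .
  moreover have "cos t * cos (t * 2) + sin t * sin (t * 2) = cos t"
    unfolding a b by (simp add: algebra_simps power2_eq_square)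
  ultimately show ?thesis unfolding ee_minus2
    by (simp add: complex_eq_iff algebra_simps power2_eq_square)
qed

lemma E_ne1: "sin t \<noteq> 0 \<Longrightarrow> ee (-2) t \<noteq> 1"
  using E_rel[of t] by auto

lemma E_cot: assumes "sin t \<noteq> 0"
  shows "\<i> * complex_of_real (cos t / sin t) = 1 - 2 / (1 - ee (-2) t)"
proof -
  have ne: "1 - ee (-2) t \<noteq> 0" using E_ne1[OF assms] by simp
  have "2 / (1 - ee (-2) t) = (complex_of_real (sin t) - \<i> * complex_of_real (cos t)) / complex_of_real (sin t)"
    using E_rel[of t] ne assms by (simp add: field_simps)
  also have "\<dots> = 1 - \<i> * complex_of_real (cos t / sin t)"
    using assms by (simp add: field_simps)
  finally show ?thesis by simp
qed

lemma W_refl: "W k (2*pi - t) = W k t"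
  by (simp add: W_def sin_diff)

lemma W_deriv:
  assumes k: "k \<ge> 0" and s: "sin t \<noteq> 0"
  shows "(W k has_real_derivative (2 * k * (cos t / sin t) * W k t)) (at t)"
proof (cases "k = 0")
  case True
  then have "W k = (\<lambda>t. 1)" by (auto simp: W_def fun_eq_iff)
  then show ?thesis using True by simp
next
  case False
  then have kp: "k > 0" using k by simp
  have eqf: "W k = (\<lambda>t. ((2 * sin t)\<^sup>2) powr k)"
  proof
    fix x
    show "W k x = ((2 * sin x)\<^sup>2) powr k"
    proof (cases "sin x = 0")
      case True then show ?thesis using kp by (simp add: W_def)
    next
      case False
      have "\<bar>2 * sin x\<bar> powr (2 * k) = (\<bar>2 * sin x\<bar> powr 2) powr k"
        by (simp only: powr_powr)
      also have "\<bar>2 * sin x\<bar> powr 2 = (2 * sin x)\<^sup>2"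
        by simp
      finally have *: "\<bar>2 * sin x\<bar> powr (2 * k) = ((2 * sin x)\<^sup>2) powr k" .
      have "W k x = \<bar>2 * sin x\<bar> powr (2 * k)" using kp by (simp add: W_def)
      then show ?thesis using * by (rule trans)
    qed
  qed
  have g: "((\<lambda>t. (2 * sin t)\<^sup>2) has_real_derivative (2 * (2 * sin t) * (2 * cos t))) (at t)"
    by (auto intro!: derivative_eq_intros)
  have gp: "(2 * sin t)\<^sup>2 > 0" using s by simp
  have "((\<lambda>t. ((2 * sin t)\<^sup>2) powr k) has_real_derivative
     (((2 * sin t)\<^sup>2) powr k) * (0 * ln ((2 * sin t)\<^sup>2) + (2 * (2 * sin t) * (2 * cos t)) * k / (2 * sin t)\<^sup>2)) (at t)"
    by (rule DERIV_powr[OF g gp]) simp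
  moreover have "(((2 * sin t)\<^sup>2) powr k) * (0 * ln ((2 * sin t)\<^sup>2) + (2 * (2 * sin t) * (2 * cos t)) * k / (2 * sin t)\<^sup>2)
      = 2 * k * (cos t / sin t) * W k t"
    using s by (simp add: eqf field_simps power2_eq_square)
  ultimately show ?thesis unfolding eqf by simp
qed

lemma ee_deriv: "(ee m has_vector_derivative (\<i> * of_int m * ee m t)) (at t within S)"
proof -
  have "((\<lambda>z. exp (\<i> * of_int m * z)) has_field_derivative (\<i> * of_int m * exp (\<i> * of_int m * of_real t))) (at (of_real t))"
    by (auto intro!: derivative_eq_intros)
  then have "((\<lambda>x. exp (\<i> * of_int m * of_real x)) has_vector_derivative (\<i> * of_int m * exp (\<i> * of_int m * of_real t))) (at t within S)"
    by (rule has_vector_derivative_real_field)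
  then show ?thesis unfolding ee_def[abs_def] by simp
qed

lemma integral_refl2pi:
  fixes f :: "real \<Rightarrow> complex"
  shows "integral {0..2*pi} (\<lambda>t. f (2*pi - t)) = integral {0..2*pi} f"
proof -
  have "integral {0..2*pi} (\<lambda>t. f (2*pi - t)) = integral {- 0..- (-(2*pi))} (\<lambda>t. (f \<circ> (+) (2*pi)) (- t))"
    by (simp add: o_def)
  also have "\<dots> = integral {-(2*pi)..0} (f \<circ> (+) (2*pi))"
    by (rule Henstock_Kurzweil_Integration.integral_reflect_real[where f="f \<circ> (+) (2*pi)" and a="-(2*pi)" and b=0])
  also have "\<dots> = integral {0..2*pi} f"
    by (simp add: integral_shift_Icc_real)
  finally show ?thesis .
qed

lemma alg_ident:
  fixes A B a b q jj ll kk w :: complex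
  shows "- (A*b - B*a) * 2 * kk * w * (1 - 2*q) + (jj - ll) * (A*b + B*a) * w =
    (((jj-kk)*A + 2*kk*(A - a)*q) * b - A * ((ll-kk)*b + 2*kk*(b - B)*(1 - q))) * w
  + (((jj-kk)*a + 2*kk*(a - A)*(1-q)) * B - a * ((ll-kk)*B + 2*kk*(B - b)*q)) * w"
  by (simp add: algebra_simps)

lemma inv_E_rel:
  fixes E :: complex
  assumes "E \<noteq> 0" "E \<noteq> 1"
  shows "1 / (1 - 1/E) = 1 - 1/(1-E)"
proof -
  have "1 - E \<noteq> 0" "E - 1 \<noteq> 0" using assms by auto
  then show ?thesis using assms by (simp add: field_simps)
qed

lemma ip_sym:
  assumes k: "k \<ge> 0"
  shows "ip k (Dfun k j) (ee l) = ip k (ee j) (Dfun k l)"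
proof -
  define \<Phi> where "\<Phi> t = (Dfun k j t * cnj (ee l t) - ee j t * cnj (Dfun k l t)) * complex_of_real (W k t)" for t
  have cW: "continuous_on {0..2*pi} (\<lambda>t. complex_of_real (W k t))"
    by (intro continuous_on_of_real W_cont k)
  have c\<Phi>: "continuous_on {0..2*pi} \<Phi>" unfolding \<Phi>_def by (intro continuous_intros cW)
  have c\<Phi>r: "continuous_on {0..2*pi} (\<lambda>t. \<Phi> (2*pi - t))"
    by (rule continuous_on_compose2[OF c\<Phi>]) (auto intro!: continuous_intros)
  have diff: "ip k (Dfun k j) (ee l) - ip k (ee j) (Dfun k l) = (1/(2*pi)) * integral {0..2*pi} \<Phi>"
  proof -
    have "integral {0..2*pi} \<Phi> = integral {0..2*pi} (\<lambda>t. Dfun k j t * cnj (ee l t) * complex_of_real (W k t))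
       - integral {0..2*pi} (\<lambda>t. ee j t * cnj (Dfun k l t) * complex_of_real (W k t))"
    proof -
      have i1: "(\<lambda>t. Dfun k j t * cnj (ee l t) * complex_of_real (W k t)) integrable_on {0..2*pi}"
        by (intro ip_integrable k continuous_intros)
      have i2: "(\<lambda>t. ee j t * cnj (Dfun k l t) * complex_of_real (W k t)) integrable_on {0..2*pi}"
        by (intro ip_integrable k continuous_intros)
      have "\<Phi> = (\<lambda>t. Dfun k j t * cnj (ee l t) * complex_of_real (W k t) - ee j t * cnj (Dfun k l t) * complex_of_real (W k t))"
        by (auto simp: \<Phi>_def fun_eq_iff algebra_simps)
      then show ?thesis using integral_diff[OF i1 i2] by simp
    qed
    then show ?thesis unfolding ip_def by (simp only: right_diff_distrib)
  qed
  define d where "d = j - l"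
  define G where "G t = - \<i> * ((ee d t - ee (-d) t) * complex_of_real (W k t))" for t
  have cG: "continuous_on {0..2*pi} G" unfolding G_def by (intro continuous_intros cW)
  have dG: "(G has_vector_derivative (\<Phi> t + \<Phi> (2*pi - t))) (at t)" if t: "t \<in> {0<..<2*pi} - {pi}" for t
  proof -
    have s: "sin t \<noteq> 0" using sin_zeros[of t] t by auto
    have D: "(G has_vector_derivative (- \<i> * ((ee d t - ee (-d) t) * complex_of_real (2 * k * (cos t / sin t) * W k t)
       + (\<i> * of_int d * ee d t - \<i> * of_int (-d) * ee (-d) t) * complex_of_real (W k t)))) (at t)"
      unfolding G_def[abs_def]
      by (intro has_vector_derivative_mult_right has_vector_derivative_mult has_vector_derivative_diff
            ee_deriv has_vector_derivative_of_real W_deriv k s)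
    define A where "A = ee j t"
    define B where "B = ee l t"
    define E where "E = ee (-2) t"
    define q where "q = 1 / (1 - E)"
    have A0: "A \<noteq> 0" and B0: "B \<noteq> 0" and E0: "E \<noteq> 0" unfolding A_def B_def E_def by (auto simp: ee_nz)
    have E1: "E \<noteq> 1" unfolding E_def using E_ne1[OF s] .
    have s2: "sin (2*pi - t) \<noteq> 0" using s by (simp add: sin_diff)
    have rA: "ee j (2*pi - t) = 1/A" "ee (-j) (2*pi - t) = A" unfolding A_def by (simp_all add: ee_refl ee_neg)
    have rB: "ee l (2*pi - t) = 1/B" "ee (-l) (2*pi - t) = B" unfolding B_def by (simp_all add: ee_refl ee_neg)
    have rE: "ee (-2) (2*pi - t) = 1/E" unfolding E_def by (simp add: ee_refl ee_neg)
    have nA: "ee (-j) t = 1/A" unfolding A_def by (simp add: ee_neg)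
    have nB: "ee (-l) t = 1/B" unfolding B_def by (simp add: ee_neg)
    have iE: "1 / (1 - 1/E) = 1 - q" unfolding q_def by (rule inv_E_rel[OF E0 E1])
    have f1: "Dfun k j t = (of_int j - of_real k) * A + 2 * of_real k * (A - 1/A) * q"
      using Dfun_closed[OF E_ne1[OF s], of k j] unfolding A_def[symmetric] E_def[symmetric] nA q_def by simp
    have f2: "Dfun k l t = (of_int l - of_real k) * B + 2 * of_real k * (B - 1/B) * q"
      using Dfun_closed[OF E_ne1[OF s], of k l] unfolding B_def[symmetric] E_def[symmetric] nB q_def by simp
    have f3: "Dfun k j (2*pi - t) = (of_int j - of_real k) * (1/A) + 2 * of_real k * (1/A - A) * (1 - q)"
    proof -
      have "Dfun k j (2*pi - t) = (of_int j - of_real k) * (1/A) + 2 * of_real k * (1/A - A) * (1 / (1 - 1/E))"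
        using Dfun_closed[OF E_ne1[OF s2], of k j] unfolding rA rE by simp
      then show ?thesis unfolding iE .
    qed
    have f4: "Dfun k l (2*pi - t) = (of_int l - of_real k) * (1/B) + 2 * of_real k * (1/B - B) * (1 - q)"
    proof -
      have "Dfun k l (2*pi - t) = (of_int l - of_real k) * (1/B) + 2 * of_real k * (1/B - B) * (1 / (1 - 1/E))"
        using Dfun_closed[OF E_ne1[OF s2], of k l] unfolding rB rE by simp
      then show ?thesis unfolding iE .
    qed
    have cA: "cnj A = 1/A" unfolding A_def by (simp add: cnj_ee ee_neg)
    have cB: "cnj B = 1/B" unfolding B_def by (simp add: cnj_ee ee_neg)
    have cE: "cnj E = 1/E" unfolding E_def by (simp add: cnj_ee ee_neg)
    have cq0: "cnj q = 1 / (1 - cnj E)" unfolding q_def by simp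
    have cq: "cnj q = 1 - q" unfolding cq0 cE iE ..
    have ed: "ee d t = A * (1/B)" "ee (-d) t = B * (1/A)"
    proof -
      have "ee d t = ee j t * ee (-l) t" "ee (-d) t = ee l t * ee (-j) t"
        unfolding d_def by (simp_all add: ee_mult)
      then show "ee d t = A * (1/B)" "ee (-d) t = B * (1/A)" unfolding nA nB A_def B_def by simp_all
    qed
    have cot: "\<i> * complex_of_real (cos t / sin t) = 1 - 2 * q" unfolding E_def q_def using E_cot[OF s] by simp
    have lhs: "- \<i> * ((ee d t - ee (-d) t) * complex_of_real (2 * k * (cos t / sin t) * W k t)
       + (\<i> * of_int d * ee d t - \<i> * of_int (-d) * ee (-d) t) * complex_of_real (W k t))
       = - (A * (1/B) - B * (1/A)) * 2 * of_real k * of_real (W k t) * (1 - 2*q) + (of_int j - of_int l) * (A * (1/B) + B * (1/A)) * of_real (W k t)"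
    proof -
      have "- \<i> * ((ee d t - ee (-d) t) * complex_of_real (2 * k * (cos t / sin t) * W k t)
         + (\<i> * of_int d * ee d t - \<i> * of_int (-d) * ee (-d) t) * complex_of_real (W k t))
         = - (A * (1/B) - B * (1/A)) * 2 * of_real k * of_real (W k t) * (\<i> * complex_of_real (cos t / sin t)) + (of_int j - of_int l) * (A * (1/B) + B * (1/A)) * of_real (W k t)"
      proof -
        have osplit: "complex_of_real (2 * k * (cos t / sin t) * W k t) = 2 * of_real k * of_real (cos t / sin t) * of_real (W k t)"
          by (simp only: of_real_mult of_real_numeral)
        show ?thesis unfolding osplit ed unfolding d_def
          by (simp add: algebra_simps del: of_real_divide of_real_mult)
      qed
      then show ?thesis unfolding cot .
    qed
    have cnj1: "cnj (Dfun k l t) = (of_int l - of_real k) * (1/B) + 2 * of_real k * (1/B - B) * (1 - q)"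
      unfolding f2 by (simp add: cB cq)
    have cnj2: "cnj (Dfun k l (2*pi - t)) = (of_int l - of_real k) * B + 2 * of_real k * (B - 1/B) * q"
      unfolding f4 using cA cB cq by simp
    have rhs: "\<Phi> t + \<Phi> (2*pi - t) =
      (((of_int j - of_real k)*A + 2* of_real k*(A - 1/A)*q) * (1/B) - A * ((of_int l - of_real k)*(1/B) + 2* of_real k*(1/B - B)*(1 - q))) * of_real (W k t)
    + (((of_int j - of_real k)*(1/A) + 2* of_real k*(1/A - A)*(1-q)) * B - (1/A) * ((of_int l - of_real k)*B + 2* of_real k*(B - 1/B)*q)) * of_real (W k t)"
    proof -
      have "cnj (ee l t) = 1/B" "cnj (ee l (2*pi - t)) = B" using cB unfolding rB B_def by (simp_all add: cnj_ee ee_neg)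
      then show ?thesis unfolding \<Phi>_def cnj1 cnj2 W_refl f1 f3 A_def[symmetric] rA by simp
    qed
    have "- \<i> * ((ee d t - ee (-d) t) * complex_of_real (2 * k * (cos t / sin t) * W k t)
       + (\<i> * of_int d * ee d t - \<i> * of_int (-d) * ee (-d) t) * complex_of_real (W k t)) = \<Phi> t + \<Phi> (2*pi - t)"
      unfolding lhs rhs by (rule alg_ident)
    with D show ?thesis by simp
  qed
  have "((\<lambda>t. \<Phi> t + \<Phi> (2*pi - t)) has_integral (G (2*pi) - G 0)) {0..2*pi}"
    by (rule fundamental_theorem_of_calculus_interior_strong[of "{pi}"]) (use dG cG in auto)
  moreover have "G (2*pi) = 0" "G 0 = 0"
    unfolding G_def using ee_refl[of d 0] ee_refl[of "-d" 0] by (simp_all add: ee_def)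
  ultimately have "integral {0..2*pi} (\<lambda>t. \<Phi> t + \<Phi> (2*pi - t)) = 0"
    by (simp add: integral_unique)
  moreover have "integral {0..2*pi} (\<lambda>t. \<Phi> t + \<Phi> (2*pi - t)) = integral {0..2*pi} \<Phi> + integral {0..2*pi} (\<lambda>t. \<Phi> (2*pi - t))"
    by (intro integral_add integrable_continuous_interval c\<Phi> c\<Phi>r)
  ultimately have "integral {0..2*pi} \<Phi> = 0"
    using integral_refl2pi[of \<Phi>] by simp
  with diff show ?thesis by simp
qed



lemma ip_add_right:
  assumes "k \<ge> 0" "continuous_on {0..2*pi} f" "continuous_on {0..2*pi} g" "continuous_on {0..2*pi} h"
  shows "ip k h (\<lambda>t. f t + g t) = ip k h f + ip k h g"
proof -
  have "ip k h (\<lambda>t. f t + g t) = cnj (ip k (\<lambda>t. f t + g t) h)" by (rule ip_cnj)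
  also have "\<dots> = cnj (ip k f h + ip k g h)" using ip_add[OF assms] by simp
  also have "\<dots> = ip k h f + ip k h g" by (simp add: ip_cnj[of k f h] ip_cnj[of k g h])
  finally show ?thesis .
qed

lemma ip_cmult_right: "ip k h (\<lambda>t. c * f t) = cnj c * ip k h f"
proof -
  have "ip k h (\<lambda>t. c * f t) = cnj (ip k (\<lambda>t. c * f t) h)" by (rule ip_cnj)
  also have "\<dots> = cnj c * ip k h f" by (simp add: ip_cmult ip_cnj[of k f h])
  finally show ?thesis .
qed

lemma tp_insert: "finite F \<Longrightarrow> m \<notin> F \<Longrightarrow> tp (insert m F) c t = c m * ee m t + tp F c t"
  by (simp add: tp_def)

lemma ip_tp_self:
  assumes "k \<ge> 0" "finite L" "continuous_on {0..2*pi} h"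
  shows "ip k h (tp L c) = (\<Sum>l\<in>L. cnj (c l) * ip k h (ee l))"
proof -
  have "tp L c = (\<lambda>t. \<Sum>l\<in>L. c l * ee l t)" by (simp add: tp_def[abs_def])
  then show ?thesis using ip_sum_right[OF assms(1,2) _ assms(3), of ee c] by (simp add: ee_cont)
qed

lemma proj_exists:
  assumes k: "k \<ge> 0" and L: "finite L"
  shows "continuous_on {0..2*pi} f \<Longrightarrow> \<exists>a. (\<forall>p. p \<notin> L \<longrightarrow> a p = 0) \<and> (\<forall>l\<in>L. ip k (\<lambda>t. f t - tp L a t) (ee l) = 0)"
  using L
proof (induction L arbitrary: f rule: finite_induct)
  case empty
  then show ?case by (intro exI[of _ "\<lambda>p. 0"]) auto
next
  case (insert m F)
  obtain a1 where a1: "\<forall>p. p \<notin> F \<longrightarrow> a1 p = 0" "\<forall>l\<in>F. ip k (\<lambda>t. f t - tp F a1 t) (ee l) = 0"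
    using insert.IH[OF insert.prems] by blast
  obtain b where b: "\<forall>p. p \<notin> F \<longrightarrow> b p = 0" "\<forall>l\<in>F. ip k (\<lambda>t. ee m t - tp F b t) (ee l) = 0"
    using insert.IH[of "ee m"] by (auto intro: ee_cont)
  define u where "u t = ee m t - tp F b t" for t
  define h where "h t = f t - tp F a1 t" for t
  have cu: "continuous_on {0..2*pi} u" unfolding u_def by (intro continuous_intros)
  have ch: "continuous_on {0..2*pi} h" unfolding h_def by (intro continuous_intros insert.prems)
  define c' where "c' p = (if p = m then 1 else - b p)" for p
  have uc: "u = tp (insert m F) c'"
  proof
    fix t
    have "tp F c' t = - tp F b t" unfolding tp_def c'_def using insert.hyps
      by (auto simp: sum_negf[symmetric] intro!: sum.cong)
    then show "u t = tp (insert m F) c' t" using insert.hyps by (simp add: tp_insert u_def c'_def)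
  qed
  have uu: "ip k u u \<noteq> 0"
  proof
    assume "ip k u u = 0"
    then have "c' m = 0" using posdef[OF k, of "insert m F" c' m] insert.hyps by (simp add: uc)
    then show False by (simp add: c'_def)
  qed
  define \<tau> where "\<tau> = ip k h u / ip k u u"
  define a where "a p = (if p = m then \<tau> else a1 p - \<tau> * b p)" for p
  have ta: "tp (insert m F) a t = \<tau> * ee m t + tp F a1 t - \<tau> * tp F b t" for t
  proof -
    have "tp F a t = tp F a1 t - \<tau> * tp F b t" unfolding tp_def a_def using insert.hyps
      by (auto simp: sum_subtractf[symmetric] sum_distrib_left algebra_simps intro!: sum.cong)
    then show ?thesis using insert.hyps by (simp add: tp_insert a_def)
  qed
  have eq: "(\<lambda>t. f t - tp (insert m F) a t) = (\<lambda>t. h t - \<tau> * u t)"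
    by (auto simp: ta h_def u_def algebra_simps)
  define X where "X t = h t - \<tau> * u t" for t
  have cX: "continuous_on {0..2*pi} X" unfolding X_def by (intro continuous_intros ch cu)
  have XF: "ip k X (ee l) = 0" if "l \<in> F" for l
  proof -
    have "ip k X (ee l) = ip k h (ee l) - ip k (\<lambda>t. \<tau> * u t) (ee l)"
      unfolding X_def by (intro ip_diff k ch cu continuous_intros)
    also have "\<dots> = 0" using a1(2) b(2) that by (simp add: ip_cmult h_def[abs_def] u_def[abs_def])
    finally show ?thesis .
  qed
  have Xu: "ip k X u = 0"
  proof -
    have "ip k X u = ip k h u - ip k (\<lambda>t. \<tau> * u t) u"
      unfolding X_def by (intro ip_diff k ch cu continuous_intros)
    also have "\<dots> = ip k h u - \<tau> * ip k u u" by (simp only: ip_cmult)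
    also have "\<dots> = 0" using uu by (simp add: \<tau>_def)
    finally show ?thesis .
  qed
  have Xm: "ip k X (ee m) = 0"
  proof -
    have "ee m = (\<lambda>t. u t + tp F b t)" by (auto simp: u_def)
    then have "ip k X (ee m) = ip k X u + ip k X (tp F b)"
      using ip_add_right[OF k cu _ cX, of "tp F b"] by (simp add: tp_cont)
    also have "ip k X (tp F b) = (\<Sum>l\<in>F. cnj (b l) * ip k X (ee l))"
      by (rule ip_tp_self[OF k insert.hyps(1) cX])
    also have "\<dots> = 0" using XF by simp
    finally show ?thesis using Xu by simp
  qed
  show ?case
  proof (intro exI[of _ a] conjI allI impI ballI)
    fix p assume "p \<notin> insert m F"
    then show "a p = 0" using a1(1) b(1) by (simp add: a_def)
  next
    fix l assume "l \<in> insert m F"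
    then show "ip k (\<lambda>t. f t - tp (insert m F) a t) (ee l) = 0"
      unfolding eq X_def[symmetric] using XF Xm by auto
  qed
qed

definition Pc :: "real \<Rightarrow> int \<Rightarrow> (int \<Rightarrow> complex) \<Rightarrow> bool" where
  "Pc k m c \<longleftrightarrow> c m = 1 \<and>
       (\<forall>j. j \<noteq> m \<and> \<not> ho_less j m \<longrightarrow> c j = 0) \<and>
       (\<forall>j. ho_less j m \<longrightarrow>
          ho_inner k (\<lambda>x. ho_expoly m c (\<i> * of_real x))
                     (\<lambda>x. exp (\<i> * of_int j * of_real x)) = 0)"

lemma coeffs_the: "ho_coeffs k m = (THE c. Pc k m c)"
  unfolding ho_coeffs_def Pc_def ..

lemma finite_less: "finite {j. ho_less j m}"
proof (rule finite_subset)
  show "{j. ho_less j m} \<subseteq> {-\<bar>m\<bar>..\<bar>m\<bar>}" by (auto simp: ho_less_def)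
qed simp

lemma ho_less_irrefl: "\<not> ho_less m m" by (simp add: ho_less_def)

lemma expoly_tp: "(\<lambda>x. ho_expoly m c (\<i> * of_real x)) = tp (insert m {j. ho_less j m}) c"
  by (auto simp: fun_eq_iff ho_expoly_def tp_def ee_def mult_ac)

lemma ee_eta: "(\<lambda>x. exp (\<i> * of_int j * of_real x)) = ee j"
  by (simp add: fun_eq_iff ee_def)

lemma Pc_iff: "Pc k m c \<longleftrightarrow> c m = 1 \<and> (\<forall>j. j \<notin> insert m {j. ho_less j m} \<longrightarrow> c j = 0) \<and>
    (\<forall>l\<in>{j. ho_less j m}. ip k (tp (insert m {j. ho_less j m}) c) (ee l) = 0)"
  unfolding Pc_def expoly_tp ee_eta ho_inner_ip by auto

lemma Pc_exists:
  assumes k: "k \<ge> 0" shows "\<exists>c. Pc k m c"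
proof -
  define L where "L = {j. ho_less j m}"
  have L: "finite L" "m \<notin> L" unfolding L_def using finite_less ho_less_irrefl by auto
  obtain a where a: "\<forall>p. p \<notin> L \<longrightarrow> a p = 0" "\<forall>l\<in>L. ip k (\<lambda>t. ee m t - tp L a t) (ee l) = 0"
    using proj_exists[OF k L(1), of "ee m"] by (auto intro: ee_cont)
  define c where "c p = (if p = m then 1 else - a p)" for p
  have "tp (insert m L) c t = ee m t - tp L a t" for t
  proof -
    have "tp L c t = - tp L a t" unfolding tp_def c_def using L
      by (auto simp: sum_negf[symmetric] intro!: sum.cong)
    then show ?thesis using L by (simp add: tp_insert c_def)
  qed
  then have "tp (insert m L) c = (\<lambda>t. ee m t - tp L a t)" by auto
  then have "Pc k m c" unfolding Pc_iff L_def[symmetric] using a L by (auto simp: c_def)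
  then show ?thesis by blast
qed

lemma Pc_unique:
  assumes k: "k \<ge> 0" and c1: "Pc k m c1" and c2: "Pc k m c2"
  shows "c1 = c2"
proof -
  define L where "L = {j. ho_less j m}"
  have L: "finite L" "m \<notin> L" unfolding L_def using finite_less ho_less_irrefl by auto
  note P1 = c1[unfolded Pc_iff L_def[symmetric]]
  note P2 = c2[unfolded Pc_iff L_def[symmetric]]
  define d where "d p = c1 p - c2 p" for p
  have dout: "d p = 0" if "p \<notin> L" for p
    using P1 P2 that by (cases "p = m") (auto simp: d_def)
  have td: "tp L d = (\<lambda>t. tp (insert m L) c1 t - tp (insert m L) c2 t)"
  proof
    fix t
    have "tp (insert m L) c1 t - tp (insert m L) c2 t = tp (insert m L) d t"
      unfolding tp_def d_def by (simp add: sum_subtractf[symmetric] algebra_simps)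
    also have "\<dots> = tp L d t" using L dout[of m] by (simp add: tp_insert)
    finally show "tp L d t = tp (insert m L) c1 t - tp (insert m L) c2 t" by simp
  qed
  have orth: "ip k (tp L d) (ee l) = 0" if "l \<in> L" for l
  proof -
    have "ip k (tp L d) (ee l) = ip k (tp (insert m L) c1) (ee l) - ip k (tp (insert m L) c2) (ee l)"
      unfolding td by (rule ip_diff[OF k]) (auto intro: continuous_intros)
    then show ?thesis using P1 P2 that by simp
  qed
  have "ip k (tp L d) (tp L d) = (\<Sum>l\<in>L. cnj (d l) * ip k (tp L d) (ee l))"
    by (rule ip_tp_self[OF k L(1)]) (rule tp_cont)
  also have "\<dots> = 0" using orth by simp
  finally have z: "ip k (tp L d) (tp L d) = 0" .
  have "d p = 0" for p
    using posdef[OF k L(1) z, of p] dout[of p] by blast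
  then show ?thesis by (auto simp: fun_eq_iff d_def)
qed

lemma coeffs_Pc: "k \<ge> 0 \<Longrightarrow> Pc k m (ho_coeffs k m)"
  unfolding coeffs_the using Pc_exists Pc_unique by (metis theI)

lemma coeffs_eq: "k \<ge> 0 \<Longrightarrow> Pc k m c \<Longrightarrow> ho_coeffs k m = c"
  unfolding coeffs_the using Pc_unique by (metis the_equality)

lemma De_supp: "De k j p \<noteq> 0 \<Longrightarrow> p = j \<or> (-\<bar>j\<bar> < p \<and> p \<le> \<bar>j\<bar> \<and> even (\<bar>j\<bar> - p))"
  unfolding De_def Pset_def by (auto split: if_splits)

lemma tp_eq_supp:
  assumes "finite A" "finite B" "\<And>p. c p \<noteq> 0 \<Longrightarrow> p \<in> A \<and> p \<in> B"
  shows "tp A c = tp B c"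
proof
  fix t
  have "tp (A \<inter> B) c t = tp A c t" unfolding tp_def
    by (rule sum.mono_neutral_left) (use assms in auto)
  moreover have "tp (A \<inter> B) c t = tp B c t" unfolding tp_def
    by (rule sum.mono_neutral_left) (use assms in auto)
  ultimately show "tp A c t = tp B c t" by simp
qed

lemma ip_refl:
  "ip k (\<lambda>t. f (2*pi - t)) (\<lambda>t. g (2*pi - t)) = ip k f g"
proof -
  have "integral {0..2*pi} (\<lambda>t. f (2*pi - t) * cnj (g (2*pi - t)) * complex_of_real (W k t))
      = integral {0..2*pi} (\<lambda>t. (\<lambda>s. f s * cnj (g s) * complex_of_real (W k s)) (2*pi - t))"
    by (simp add: W_refl)
  also have "\<dots> = integral {0..2*pi} (\<lambda>s. f s * cnj (g s) * complex_of_real (W k s))"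
    by (rule integral_refl2pi)
  finally show ?thesis unfolding ip_def by simp
qed

lemma key_sets:
  fixes n :: int
  assumes n: "n > 0"
  shows "{j. ho_less j n} = {j. \<bar>j\<bar> < n \<and> even (n - \<bar>j\<bar>)}"
    and "{j. ho_less j (-n)} = insert n {j. \<bar>j\<bar> < n \<and> even (n - \<bar>j\<bar>)}"
  using n by (auto simp: ho_less_def)

lemma key_coeff:
  fixes n :: int
  assumes n: "n > 0" and k: "k \<ge> 0"
  shows "ho_coeffs k (-n) n = complex_of_real (k / (of_int n + k))"
proof -
  define a where "a = ho_coeffs k (-n)"
  define Ln where "Ln = {j. \<bar>j\<bar> < n \<and> even (n - \<bar>j\<bar>)}"
  define Lm where "Lm = insert n Ln"
  define S where "S = insert (-n) Lm"
  have finLn: "finite Ln" unfolding Ln_def by (rule finite_subset[of _ "{-n..n}"]) auto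
  have finLm: "finite Lm" "finite S" unfolding Lm_def S_def using finLn by auto
  have nLn: "n \<notin> Ln" "-n \<notin> Lm" unfolding Lm_def Ln_def using n by auto
  have P: "Pc k (-n) a" unfolding a_def by (rule coeffs_Pc[OF k])
  have setm: "{j. ho_less j (-n)} = Lm" unfolding Lm_def Ln_def using key_sets(2)[OF n] .
  note P' = P[unfolded Pc_iff setm S_def[symmetric]]
  have a_out: "a p = 0" if "p \<notin> S" for p using P' that by auto
  have a_mn: "a (-n) = 1" using P' by simp
  have a_orth: "ip k (tp S a) (ee l) = 0" if "l \<in> Lm" for l using P' that by auto
  have S_char: "p \<in> S \<longleftrightarrow> \<bar>p\<bar> \<le> n \<and> even (n - \<bar>p\<bar>)" for p
    unfolding S_def Lm_def Ln_def using n by (auto simp: abs_if)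
  have Lm_char: "p \<in> Lm \<longleftrightarrow> p \<in> S \<and> p \<noteq> -n" for p
    unfolding S_def using nLn by auto
  have D1: "p \<in> S" if "j \<in> S" "De k j p \<noteq> 0" for j p
  proof -
    from De_supp[OF that(2)] that(1) show ?thesis unfolding S_char
      by (auto simp: abs_if) presburger+
  qed
  have D2: "p \<in> Lm" if "l \<in> Lm" "De k l p \<noteq> 0" for l p
  proof -
    have "p \<in> S" using D1[OF _ that(2)] that(1) Lm_char by blast
    moreover have "p \<noteq> -n"
      using De_supp[OF that(2)] that(1) unfolding Lm_char S_char by auto
    ultimately show ?thesis using Lm_char by blast
  qed
  have D3: "De k j (-n) = 0" if "j \<in> Lm" for j
    using D2[OF that, of "-n"] nLn by blast
  have D4: "De k (-n) (-n) = - of_int n - of_real k" "De k (-n) n = - 2 * of_real k"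
    "De k n n = of_int n + of_real k"
    using n by (auto simp: De_def Pset_def)
  have D5: "De k j n = 0" if "j \<in> Ln" for j
  proof (rule ccontr)
    assume "De k j n \<noteq> 0"
    from De_supp[OF this] that n show False unfolding Ln_def by auto
  qed
  define lam where "lam = - of_int n - complex_of_real k"
  define v where "v p = (\<Sum>j\<in>S. a j * De k j p)" for p
  define r where "r p = v p - lam * a p" for p
  have Dtp: "Dfun k j = tp S (De k j)" if "j \<in> S" for j
    unfolding Dfun_def
  proof (rule tp_eq_supp)
    fix p assume "De k j p \<noteq> 0"
    then show "p \<in> {-\<bar>j\<bar>..\<bar>j\<bar>} \<and> p \<in> S" using D1[OF that] De_supp[of k j p] by auto
  qed (use finLm in auto)
  have DtpL: "Dfun k l = tp Lm (De k l)" if "l \<in> Lm" for l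
    unfolding Dfun_def
  proof (rule tp_eq_supp)
    fix p assume "De k l p \<noteq> 0"
    then show "p \<in> {-\<bar>l\<bar>..\<bar>l\<bar>} \<and> p \<in> Lm" using D2[OF that] De_supp[of k l p] by auto
  qed (use finLm in auto)
  have tpv: "tp S v = (\<lambda>t. \<Sum>j\<in>S. a j * Dfun k j t)"
  proof
    fix t
    have "tp S v t = (\<Sum>p\<in>S. \<Sum>j\<in>S. a j * De k j p * ee p t)"
      unfolding tp_def v_def by (simp add: sum_distrib_right)
    also have "\<dots> = (\<Sum>j\<in>S. a j * (\<Sum>p\<in>S. De k j p * ee p t))"
      by (subst sum.swap) (simp add: sum_distrib_left mult.assoc)
    also have "\<dots> = (\<Sum>j\<in>S. a j * Dfun k j t)"
      by (rule sum.cong) (auto simp: Dtp tp_def)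
    finally show "tp S v t = (\<Sum>j\<in>S. a j * Dfun k j t)" .
  qed
  have r_out: "r p = 0" if "p \<notin> Lm" for p
  proof (cases "p = -n")
    case True
    have "v (-n) = a (-n) * De k (-n) (-n) + (\<Sum>j\<in>Lm. a j * De k j (-n))"
      unfolding v_def S_def using finLm nLn by simp
    also have "\<dots> = lam" using D3 a_mn D4 by (simp add: lam_def)
    finally show ?thesis using True a_mn by (simp add: r_def)
  next
    case False
    then have "p \<notin> S" using that Lm_char by blast
    then have "v p = 0" unfolding v_def using D1 by (auto intro!: sum.neutral)
    then show ?thesis using a_out[OF \<open>p \<notin> S\<close>] by (simp add: r_def)
  qed
  have tpr: "tp Lm r = (\<lambda>t. tp S v t - lam * tp S a t)"
  proof -
    have "tp Lm r = tp S r"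
      by (rule tp_eq_supp) (use finLm r_out Lm_char in auto)
    also have "\<dots> = (\<lambda>t. tp S v t - lam * tp S a t)"
      by (auto simp: tp_def r_def fun_eq_iff sum_subtractf sum_distrib_left algebra_simps)
    finally show ?thesis .
  qed
  have r_orth: "ip k (tp Lm r) (ee l) = 0" if l: "l \<in> Lm" for l
  proof -
    have "ip k (tp S v) (ee l) = (\<Sum>j\<in>S. a j * ip k (Dfun k j) (ee l))"
      unfolding tpv by (rule ip_sum[OF k finLm(2)]) (auto intro: continuous_intros)
    also have "\<dots> = (\<Sum>j\<in>S. a j * ip k (ee j) (Dfun k l))"
      by (simp add: ip_sym[OF k])
    also have "\<dots> = ip k (tp S a) (Dfun k l)"
      unfolding tp_def[abs_def] by (rule ip_sum[OF k finLm(2), symmetric]) (auto intro: continuous_intros)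
    also have "\<dots> = ip k (tp S a) (tp Lm (De k l))" using DtpL[OF l] by simp
    also have "\<dots> = (\<Sum>p\<in>Lm. cnj (De k l p) * ip k (tp S a) (ee p))"
      by (rule ip_tp_self[OF k finLm(1)]) (rule tp_cont)
    also have "\<dots> = 0" using a_orth by simp
    finally have v0: "ip k (tp S v) (ee l) = 0" .
    have "ip k (tp Lm r) (ee l) = ip k (tp S v) (ee l) - ip k (\<lambda>t. lam * tp S a t) (ee l)"
      unfolding tpr by (rule ip_diff[OF k]) (auto intro: continuous_intros)
    also have "\<dots> = 0" using v0 a_orth[OF l] by (simp add: ip_cmult)
    finally show ?thesis .
  qed
  have "ip k (tp Lm r) (tp Lm r) = (\<Sum>l\<in>Lm. cnj (r l) * ip k (tp Lm r) (ee l))"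
    by (rule ip_tp_self[OF k finLm(1)]) (rule tp_cont)
  also have "\<dots> = 0" using r_orth by simp
  finally have "ip k (tp Lm r) (tp Lm r) = 0" .
  then have rn: "r n = 0" using posdef[OF k finLm(1)] by (simp add: Lm_def)
  have "v n = a (-n) * De k (-n) n + (a n * De k n n + (\<Sum>j\<in>Ln. a j * De k j n))"
  proof -
    have "- n \<notin> insert n Ln" using nLn n unfolding Lm_def by auto
    then show ?thesis unfolding v_def S_def Lm_def using finLn nLn n by simp
  qed
  also have "\<dots> = - 2 * of_real k + a n * (of_int n + of_real k)" using D4 D5 a_mn by simp
  finally have "- 2 * of_real k + a n * (of_int n + of_real k) - lam * a n = 0"
    using rn by (simp add: r_def)
  then have "a n * (2 * (of_int n + of_real k)) = 2 * of_real k"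
    by (simp add: lam_def algebra_simps)
  moreover have "of_int n + complex_of_real k \<noteq> 0"
  proof -
    have "of_int n + complex_of_real k = complex_of_real (of_int n + k)" by simp
    moreover have "of_int n + k > 0" using n k by simp
    ultimately show ?thesis by (metis of_real_eq_0_iff order_less_irrefl)
  qed
  ultimately have "a n = of_real k / (of_int n + of_real k)"
  proof -
    assume h1: "a n * (2 * (of_int n + of_real k)) = 2 * of_real k" and h2: "of_int n + complex_of_real k \<noteq> 0"
    have "2 * (a n * (of_int n + of_real k)) = 2 * of_real k" using h1 by (simp only: mult_ac)
    then have "a n * (of_int n + of_real k) = of_real k" by simp
    then show ?thesis using h2 by (simp add: eq_divide_eq)
  qed
  then show ?thesis unfolding a_def by simp
qed

lemma sum_neg_sym:
  fixes S :: "int set"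
  assumes "\<And>p. p \<in> S \<longleftrightarrow> -p \<in> S"
  shows "(\<Sum>p\<in>S. g (-p)) = (\<Sum>p\<in>S. g p)"
proof -
  have img: "uminus ` S = S"
  proof (intro set_eqI iffI)
    fix x assume "x \<in> uminus ` S" then show "x \<in> S" using assms by auto
  next
    fix x assume "x \<in> S" then have "-x \<in> S" using assms by auto
    then show "x \<in> uminus ` S" by (intro image_eqI[of _ _ "-x"]) auto
  qed
  have "(\<Sum>p\<in>uminus ` S. g p) = (\<Sum>p\<in>S. g (-p))"
    by (subst sum.reindex) (auto simp: inj_on_def)
  then show ?thesis unfolding img by simp
qed

lemma main_pos:
  fixes n :: int
  assumes n: "n > 0" and k: "k \<ge> 0"
  shows "complex_of_real (1 - k\<^sup>2 / (real_of_int n + k)\<^sup>2) * HO_E k n x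
         = HO_E k (-n) (-x) - complex_of_real (k / (real_of_int n + k)) * HO_E k (-n) x"
proof -
  define a where "a = ho_coeffs k (-n)"
  define \<kappa> where "\<kappa> = complex_of_real (k / (real_of_int n + k))"
  define Ln where "Ln = {j. \<bar>j\<bar> < n \<and> even (n - \<bar>j\<bar>)}"
  define Lm where "Lm = insert n Ln"
  define S where "S = insert (-n) Lm"
  have finLn: "finite Ln" unfolding Ln_def by (rule finite_subset[of _ "{-n..n}"]) auto
  have finLm: "finite Lm" "finite S" unfolding Lm_def S_def using finLn by auto
  have nLn: "n \<notin> Ln" "-n \<notin> Lm" "-n \<notin> Ln" "-n \<noteq> n" unfolding Lm_def Ln_def using n by auto
  have P: "Pc k (-n) a" unfolding a_def by (rule coeffs_Pc[OF k])
  have setm: "{j. ho_less j (-n)} = Lm" unfolding Lm_def Ln_def using key_sets(2)[OF n] .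
  have setn: "{j. ho_less j n} = Ln" unfolding Ln_def using key_sets(1)[OF n] .
  note P' = P[unfolded Pc_iff setm S_def[symmetric]]
  have a_out: "a p = 0" if "p \<notin> S" for p using P' that by auto
  have a_mn: "a (-n) = 1" using P' by simp
  have a_n: "a n = \<kappa>" unfolding a_def \<kappa>_def by (rule key_coeff[OF n k])
  have a_orth: "ip k (tp S a) (ee l) = 0" if "l \<in> Lm" for l using P' that by auto
  have S_char: "p \<in> S \<longleftrightarrow> \<bar>p\<bar> \<le> n \<and> even (n - \<bar>p\<bar>)" for p
    unfolding S_def Lm_def Ln_def using n by (auto simp: abs_if)
  have S_sym: "p \<in> S \<longleftrightarrow> -p \<in> S" for p unfolding S_char by simp
  have S_eq: "S = insert (-n) (insert n Ln)" unfolding S_def Lm_def ..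
  have kr: "k / (real_of_int n + k) < 1" "0 \<le> k / (real_of_int n + k)" using n k by auto
  have kk: "1 - \<kappa>\<^sup>2 \<noteq> 0"
  proof -
    have "(k / (real_of_int n + k))\<^sup>2 < 1" using kr by (simp add: power_less_one_iff abs_less_iff)
    then have "1 - (k / (real_of_int n + k))\<^sup>2 \<noteq> 0" by simp
    moreover have "1 - \<kappa>\<^sup>2 = complex_of_real (1 - (k / (real_of_int n + k))\<^sup>2)" unfolding \<kappa>_def by simp
    ultimately show ?thesis by (metis of_real_eq_0_iff)
  qed
  define c where "c p = (a (-p) - \<kappa> * a p) / (1 - \<kappa>\<^sup>2)" for p
  have c_out: "c p = 0" if "p \<notin> insert n Ln" for p
  proof (cases "p = -n")
    case True then show ?thesis using a_mn a_n by (simp add: c_def)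
  next
    case False
    then have "p \<notin> S" using that S_eq by auto
    then have "-p \<notin> S" using S_sym by blast
    then show ?thesis using a_out \<open>p \<notin> S\<close> by (simp add: c_def)
  qed
  have c_n: "c n = 1" using a_mn a_n kk by (simp add: c_def power2_eq_square)
  have tpc: "tp (insert n Ln) c = (\<lambda>t. (1 / (1 - \<kappa>\<^sup>2)) * (tp S a (2*pi - t) - \<kappa> * tp S a t))"
  proof -
    have "tp (insert n Ln) c = tp S c"
      by (rule tp_eq_supp) (use finLm finLn c_out S_eq in auto)
    moreover have "tp S c t = (1 / (1 - \<kappa>\<^sup>2)) * (tp S a (2*pi - t) - \<kappa> * tp S a t)" for t
    proof -
      have "(\<Sum>p\<in>S. a (-p) * ee p t) = (\<Sum>p\<in>S. a p * ee (-p) t)"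
        using sum_neg_sym[OF S_sym, of "\<lambda>p. a p * ee (-p) t"] by simp
      also have "\<dots> = tp S a (2*pi - t)" unfolding tp_def by (simp add: ee_refl)
      finally have "(\<Sum>p\<in>S. a (-p) * ee p t) = tp S a (2*pi - t)" .
      moreover have "tp S c t = (1 / (1 - \<kappa>\<^sup>2)) * ((\<Sum>p\<in>S. a (-p) * ee p t) - \<kappa> * tp S a t)"
        unfolding tp_def c_def by (simp add: sum_distrib_left sum_subtractf[symmetric] algebra_simps diff_divide_distrib)
      ultimately show ?thesis by simp
    qed
    ultimately show ?thesis by auto
  qed
  have orth: "ip k (tp (insert n Ln) c) (ee l) = 0" if l: "l \<in> Ln" for l
  proof -
    have lm: "l \<in> Lm" "-l \<in> Lm" using l unfolding Lm_def Ln_def by auto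
    have r0: "ip k (\<lambda>t. tp S a (2*pi - t)) (ee l) = 0"
    proof -
      have "ee l = (\<lambda>t. ee (-l) (2*pi - t))" by (simp add: fun_eq_iff ee_refl)
      then have "ip k (\<lambda>t. tp S a (2*pi - t)) (ee l) = ip k (tp S a) (ee (-l))"
        using ip_refl[of k "tp S a" "ee (-l)"] by simp
      then show ?thesis using a_orth[OF lm(2)] by simp
    qed
    have "ip k (tp (insert n Ln) c) (ee l)
        = (1 / (1 - \<kappa>\<^sup>2)) * ip k (\<lambda>t. tp S a (2*pi - t) - \<kappa> * tp S a t) (ee l)"
      unfolding tpc by (rule ip_cmult)
    also have "ip k (\<lambda>t. tp S a (2*pi - t) - \<kappa> * tp S a t) (ee l)
        = ip k (\<lambda>t. tp S a (2*pi - t)) (ee l) - ip k (\<lambda>t. \<kappa> * tp S a t) (ee l)"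
    proof (rule ip_diff[OF k])
      show "continuous_on {0..2*pi} (\<lambda>t. tp S a (2*pi - t))"
        by (rule continuous_on_compose2[OF tp_cont[of UNIV S a]]) (auto intro!: continuous_intros)
    qed (auto intro: continuous_intros)
    also have "\<dots> = 0" using r0 a_orth[OF lm(1)] by (simp add: ip_cmult)
    finally show ?thesis by simp
  qed
  have Pcn: "Pc k n c"
    unfolding Pc_iff setn using c_n c_out orth by auto
  have bc: "ho_coeffs k n = c" by (rule coeffs_eq[OF k Pcn])
  define e where "e y j = exp (complex_of_int j * complex_of_real y)" for y j
  have HOn: "HO_E k n x = (\<Sum>j\<in>S. c j * e x j)"
  proof -
    have "HO_E k n x = (\<Sum>j\<in>insert n Ln. c j * e x j)"
      unfolding HO_E_def ho_expoly_def bc setn e_def ..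
    also have "\<dots> = (\<Sum>j\<in>S. c j * e x j)"
      unfolding S_eq using finLn nLn c_out[of "-n"] by simp
    finally show ?thesis .
  qed
  have HOm: "HO_E k (-n) y = (\<Sum>j\<in>S. a j * e y j)" for y
    unfolding HO_E_def ho_expoly_def setm e_def a_def S_def ..
  have refl: "(\<Sum>j\<in>S. a j * e (-x) j) = (\<Sum>j\<in>S. a (-j) * e x j)"
    using sum_neg_sym[OF S_sym, of "\<lambda>j. a j * e (-x) j"] by (simp add: e_def)
  have "(1 - \<kappa>\<^sup>2) * (\<Sum>j\<in>S. c j * e x j) = (\<Sum>j\<in>S. a (-j) * e x j) - \<kappa> * (\<Sum>j\<in>S. a j * e x j)"
  proof -
    have "(1 - \<kappa>\<^sup>2) * (\<Sum>j\<in>S. c j * e x j) = (\<Sum>j\<in>S. ((1 - \<kappa>\<^sup>2) * c j) * e x j)"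
      by (simp add: sum_distrib_left mult.assoc)
    also have "\<dots> = (\<Sum>j\<in>S. a (-j) * e x j - \<kappa> * (a j * e x j))"
    proof (rule sum.cong)
      fix j
      have cj: "(1 - \<kappa>\<^sup>2) * c j = a (-j) - \<kappa> * a j" unfolding c_def using kk by simp
      show "((1 - \<kappa>\<^sup>2) * c j) * e x j = a (-j) * e x j - \<kappa> * (a j * e x j)"
        unfolding cj by (simp only: left_diff_distrib mult.assoc)
    qed simp
    also have "\<dots> = (\<Sum>j\<in>S. a (-j) * e x j) - \<kappa> * (\<Sum>j\<in>S. a j * e x j)"
      by (simp add: sum_subtractf sum_distrib_left)
    finally show ?thesis .
  qed
  moreover have "complex_of_real (1 - k\<^sup>2 / (real_of_int n + k)\<^sup>2) = 1 - \<kappa>\<^sup>2"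
    unfolding \<kappa>_def by (simp add: power_divide)
  ultimately show ?thesis unfolding HOn HOm refl \<kappa>_def by simp
qed

theorem mainTheorem4:
  fixes k :: real and n :: int and x :: real
  assumes "k \<ge> 0" and "n \<ge> 0" and "real_of_int n + k > 0"
  shows "complex_of_real (1 - k\<^sup>2 / (real_of_int n + k)\<^sup>2) * HO_E k n x
         = HO_E k (-n) (-x) - complex_of_real (k / (real_of_int n + k)) * HO_E k (-n) x"
proof (cases "n = 0")
  case False
  then have "n > 0" using assms(2) by simp
  then show ?thesis using main_pos[OF _ assms(1)] by blast
next
  case True
  then have kp: "k > 0" using assms(3) by simp
  have emp: "{j. ho_less j 0} = {}" by (auto simp: ho_less_def)
  have H: "HO_E k 0 y = ho_coeffs k 0 0" for y
    unfolding HO_E_def ho_expoly_def emp by simp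
  show ?thesis using True kp by (simp add: H)
qed

end
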